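(* Let $F$, $H$, $X$, $\Omega$, $Q$ and the sequences $(x_k),(w_k),(w'_k),(y_k)$ be as described in the context (generated by the IneIREG method). Suppose the regularization parameters are $\eta_k=\eta_0/(k+1)^b$ for all $k\ge 0$, with $0<\eta_0\le 1$ and $0<b<1$. Suppose also that $\alpha_0\in[0,1]$ and the sequence $(\alpha_k/\eta_k)_{k\ge0}$ is nonincreasing; that $\lambda_k\in[\underline\lambda,\overline\lambda]$ for all $k\ge0$, where $0<\underline\lambda\le\overline\lambda\le 1/(L_F+\eta_0L_H)$; and that $s:=\sum_{k=0}^\infty \delta_k\eta_k^{-1}<+\infty$. For $k\ge1$ let $\Lambda_k=\sum_{j=0}^{k-1}\lambda_j$ and $\overline y_k=\Lambda_k^{-1}\sum_{j=0}^{k-1}\lambda_j y_j$. Then: (a) for all $k\ge1$, $$-B_H\,\mathrm{dist}(\overline y_k,Q)\le \mathrm{Gap}(\overline y_k,H,Q)\le \frac{1}{k^{1-b}}\Big(\frac{D_X^2}{2^{1-b}\underline\lambda\,\eta_0}\Big)+\frac1k\Big(\frac{s}{2\underline\lambda}\Big);$$ (b) for all $k\ge1$, $$0\le \mathrm{Gap}(\overline y_k,F,X)\le \frac1k\Big(\frac{D_X^2}{2\underline\lambda}\Big)+\frac1k\Big(\frac{s}{2\underline\lambda}\Big)+\frac{1}{k^b}\Big(\frac{\eta_0\overline\lambda C_HD_X}{(1-b)\underline\lambda}\Big);$$ (c) if $Q$ is $\sigma$-weakly sharp of order $\mathcal M\ge1$, then for all $k\ge1$, $$\mathrm{Gap}(\overline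 y_k,H,Q)\ge -\frac{B_H}{\sigma^{1/\mathcal M}}\Bigg(\frac1k\Big(\frac{D_X^2}{2\underline\lambda}\Big)+\frac1k\Big(\frac{s}{2\underline\lambda}\Big)+\frac{1}{k^b}\Big(\frac{\eta_0\overline\lambda C_HD_X}{(1-b)\underline\lambda}\Big)\Bigg)^{1/\mathcal M}.$$
   Context: Work in $\mathbb{R}^n$ with Euclidean inner product $\langle\cdot,\cdot\rangle$ and norm $\|\cdot\|$. The maps $F\colon \mathrm{Dom}\,F\to\mathbb{R}^n$ and $H\colon\mathrm{Dom}\,H\to\mathbb{R}^n$ are monotone and Lipschitz continuous with constants $L_F>0$ and $L_H>0$. $X$ is a nonempty compact convex set and $\Omega$ a nonempty closed convex set with $X\subset\Omega\subset\mathrm{Dom}\,F\cap\mathrm{Dom}\,H$; $P_X,P_\Omega$ denote orthogonal projections. $Q:=\{x\in X:\langle F(x),y-x\rangle\ge0\ \forall y\in X\}$ (solution set of VIP$(F,X)$) is assumed nonempty. $D_X:=\sup_{x,y\in X}\|x-y\|$, $C_H:=\sup_{x\in X}\|H(x)\|$, $B_H:=\sup_{x\in Q}\|H(x)\|$, and $\mathrm{dist}(y,Q)$ is the Euclidean distance from $y$ to $Q$. Dual gap functions: $\mathrm{Gap}(z,H,Q):=\sup_{x\in Q}\langle H(x),z-x\rangle$ and $\mathrm{Gap}(z,F,X):=\sup_{x\in X}\langle F(x),z-x\rangle$. $Q$ is $\sigma$-weakly sharp of order $\mathcal M\ge1$ ($\sigma>0$) if $\langle F(x),y-x\rangle\ge\sigma\,\mathrm{dist}(y,Q)^{\mathcal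 M}$ for all $x\in Q$, $y\in X$. IneIREG method: start with $x_0=x_{-1}\in X$; for $k=0,1,\dots$, with parameters $\alpha_k\ge0$, $\lambda_k>0$, $\eta_k>0$, set $w_k=x_k+\alpha_k(x_k-x_{k-1})$, $w'_k=P_\Omega(w_k)$, $y_k=P_X\big(w_k-\lambda_k(F(w'_k)+\eta_kH(w'_k))\big)$, $x_{k+1}=P_X\big(w_k-\lambda_k(F(y_k)+\eta_kH(y_k))\big)$. Also $\delta_k:=\alpha_k(1+\alpha_k)\|x_k-x_{k-1}\|^2$ for $k\ge0$. *)

theory Defs
  imports "HOL-Analysis.Analysis"
begin

definition monotone_op :: "'a::real_inner set \<Rightarrow> ('a \<Rightarrow> 'a) \<Rightarrow> bool" where
  "monotone_op D F \<longleftrightarrow> (\<forall>x\<in>D. \<forall>y\<in>D. inner (F x - F y) (x - y) \<ge> 0)"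

definition VI_sol :: "('a::real_inner \<Rightarrow> 'a) \<Rightarrow> 'a set \<Rightarrow> 'a set" where
  "VI_sol F X = {x \<in> X. \<forall>y\<in>X. inner (F x) (y - x) \<ge> 0}"

definition Gap :: "'a::real_inner \<Rightarrow> ('a \<Rightarrow> 'a) \<Rightarrow> 'a set \<Rightarrow> real" where
  "Gap z G S = (SUP x\<in>S. inner (G x) (z - x))"

definition weakly_sharp :: "('a::real_inner \<Rightarrow> 'a) \<Rightarrow> 'a set \<Rightarrow> 'a set \<Rightarrow> real \<Rightarrow> real \<Rightarrow> bool" where
  "weakly_sharp F X Q \<sigma> M \<longleftrightarrow>
     (\<forall>x\<in>Q. \<forall>y\<in>X. inner (F x) (y - x) \<ge> \<sigma> * (infdist y Q) powr M)"

end

theory Submission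
  imports Defs
begin


lemma eta_sum_bound:
  fixes b :: real assumes b: "0 < b" "b < 1"
  shows "(\<Sum>j<k. 1 / (real j + 1) powr b) \<le> real k powr (1 - b) / (1 - b)"
proof (induction k)
  case 0 then show ?case by simp
next
  case (Suc k)
  define K where "K = real k + 1"
  have K: "K > 0" unfolding K_def by simp
  define p where "p = K powr b"
  have p: "p > 0" unfolding p_def using K by simp
  have KK: "K powr (1 - b) = K / p" unfolding p_def using K by (simp add: powr_diff)
  have young: "real k powr (1 - b) * p \<le> real k + b"
  proof (cases "k = 0")
    case True then show ?thesis using b by simp
  next
    case False
    have "K powr b * real k powr (1 - b) \<le> b * K + (1 - b) * real k"
      by (rule Youngs_inequality_0) (use b K False in auto)
    then show ?thesis unfolding p_def K_def by (simp add: algebra_simps)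
  qed
  have "real k powr (1 - b) / (1 - b) + 1 / p \<le> K / (p * (1 - b))"
  proof -
    have "real k powr (1 - b) / (1 - b) + 1 / p = (real k powr (1 - b) * p + (1 - b)) / (p * (1 - b))"
      using p b by (simp add: field_simps)
    also have "\<dots> \<le> K / (p * (1 - b))"
      using young p b unfolding K_def by (intro divide_right_mono) auto
    finally show ?thesis .
  qed
  then have "real k powr (1 - b) / (1 - b) + 1 / (real k + 1) powr b \<le> real (Suc k) powr (1 - b) / (1 - b)"
    using KK unfolding p_def K_def by (simp add: add.commute)
  then show ?case using Suc.IH by simp
qed

lemma tele:
  fixes a c e :: "nat \<Rightarrow> real"
  assumes a: "\<And>j. 0 \<le> a j \<and> a j \<le> D" and c: "\<And>j. c j \<le> c (Suc j)"
    and e: "\<And>j. e (Suc j) \<le> e j" "\<And>j. 0 \<le> e j" and ce: "e 0 \<le> c 0"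
  shows "(\<Sum>j<Suc n. c j * (a j - a (Suc j)) + e j * (a j - a (j - 1))) \<le> c n * D"
proof -
  have inv: "(\<Sum>j<Suc n. c j * (a j - a (Suc j)) + e j * (a j - a (j - 1))) + c n * a (Suc n) - e n * a n
      \<le> (c n - e n) * D" for n
  proof (induction n)
    case 0
    have "(c 0 - e 0) * a 0 \<le> (c 0 - e 0) * D" using a ce by (intro mult_left_mono) auto
    then show ?case by (simp add: algebra_simps)
  next
    case (Suc n)
    have 1: "(c (Suc n) - c n) * a (Suc n) \<le> (c (Suc n) - c n) * D" using a c by (intro mult_left_mono) auto
    have 2: "(e n - e (Suc n)) * a n \<le> (e n - e (Suc n)) * D" using a e by (intro mult_left_mono) auto
    show ?case using Suc.IH 1 2 by (simp add: algebra_simps)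
  qed
  have "e n * a n \<le> e n * D" using a e by (intro mult_left_mono) auto
  moreover have "0 \<le> c n * a (Suc n)"
  proof -
    have "0 \<le> c 0" using ce e(2)[of 0] by simp
    moreover have "c 0 \<le> c n" using c by (induction n) (auto intro: order_trans)
    ultimately show ?thesis using a by simp
  qed
  ultimately show ?thesis using inv[of n] by (simp add: algebra_simps)
qed

lemma w_norm_identity:
  fixes p q :: "'a::real_inner"
  shows "(norm ((1 + t) *\<^sub>R p - t *\<^sub>R q))\<^sup>2 = (1 + t) * (norm p)\<^sup>2 - t * (norm q)\<^sup>2 + t * (1 + t) * (norm (p - q))\<^sup>2"
  by (simp add: power2_norm_eq_inner inner_diff inner_add inner_commute algebra_simps)

lemma eg_step:
  fixes G :: "'a::euclidean_space \<Rightarrow> 'a"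
  assumes X: "closed X" "convex X" "X \<noteq> {}" and Om: "closed \<Omega>" "convex \<Omega>" "X \<subseteq> \<Omega>"
    and lipG: "\<And>u v. u \<in> \<Omega> \<Longrightarrow> v \<in> \<Omega> \<Longrightarrow> norm (G u - G v) \<le> L * norm (u - v)"
    and l: "0 \<le> l" "l * L \<le> 1" "0 \<le> L"
    and w': "w' = closest_point \<Omega> w"
    and y: "y = closest_point X (w - l *\<^sub>R G w')"
    and z: "z = closest_point X (w - l *\<^sub>R G y)"
    and x: "x \<in> X"
  shows "(norm (z - x))\<^sup>2 \<le> (norm (w - x))\<^sup>2 - 2 * l * inner (G y) (y - x)"
proof -
  have Omne: "\<Omega> \<noteq> {}" using X Om by auto
  have yX: "y \<in> X" and zX: "z \<in> X" using y z X closest_point_in_set by auto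
  have w'O: "w' \<in> \<Omega>" using w' Om Omne closest_point_in_set by auto
  have yO: "y \<in> \<Omega>" using yX Om by auto
  define u where "u = w - l *\<^sub>R G y"
  define v where "v = w - l *\<^sub>R G w'"
  have pz: "inner (u - z) (x - z) \<le> 0" unfolding u_def z using closest_point_dot[OF X(2,1) x] by simp
  have py: "inner (v - y) (z - y) \<le> 0" unfolding v_def y using closest_point_dot[OF X(2,1) zX] by simp
  have ne: "norm (w' - y) \<le> norm (w - y)"
    using closest_point_lipschitz[OF Om(2,1) Omne, of w y] closest_point_self[OF yO] w'
    by (simp add: dist_norm)
  have "inner (G w' - G y) (z - y) \<le> norm (G w' - G y) * norm (z - y)" by (rule norm_cauchy_schwarz)
  also have "\<dots> \<le> L * norm (w' - y) * norm (z - y)" using lipG[OF w'O yO] by (intro mult_right_mono) auto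
  also have "\<dots> \<le> L * norm (w - y) * norm (z - y)" using ne l by (intro mult_right_mono mult_left_mono) auto
  finally have cs: "inner (G w' - G y) (z - y) \<le> L * norm (w - y) * norm (z - y)" .
  have "l * inner (G w' - G y) (z - y) \<le> l * (L * norm (w - y) * norm (z - y))"
    using cs l by (intro mult_left_mono) auto
  also have "\<dots> = (l * L) * (norm (w - y) * norm (z - y))" by simp
  also have "\<dots> \<le> 1 * (norm (w - y) * norm (z - y))" using l by (intro mult_right_mono) auto
  finally have cs2: "l * inner (G w' - G y) (z - y) \<le> norm (w - y) * norm (z - y)" by simp
  have amgm: "2 * (norm (w - y) * norm (z - y)) \<le> (norm (w - y))\<^sup>2 + (norm (z - y))\<^sup>2"
    using sum_squares_bound[of "norm (w - y)" "norm (z - y)"] by (simp add: power2_eq_square algebra_simps)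
  have key: "inner (w - l *\<^sub>R G y - y) (z - y) = inner (v - y) (z - y) + l * inner (G w' - G y) (z - y)"
    unfolding v_def by (simp add: inner_diff inner_add algebra_simps)
  have "(norm (z - x))\<^sup>2 = (norm (u - x))\<^sup>2 - (norm (u - z))\<^sup>2 + 2 * inner (u - z) (x - z)"
    by (simp add: power2_norm_eq_inner inner_diff inner_add inner_commute algebra_simps)
  moreover have "(norm (u - x))\<^sup>2 - (norm (u - z))\<^sup>2 =
      (norm (w - x))\<^sup>2 - 2 * l * inner (G y) (y - x)
      - ((norm (w - y))\<^sup>2 + (norm (z - y))\<^sup>2 - 2 * inner (w - l *\<^sub>R G y - y) (z - y))"
    unfolding u_def by (simp add: power2_norm_eq_inner inner_diff inner_add inner_commute algebra_simps)
  ultimately show ?thesis using pz py key cs2 amgm by linarith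
qed


lemma finalA:
  fixes k :: nat and lo \<eta>0 b D s :: real
  assumes k: "k \<ge> 1" and lo: "lo > 0" and e: "\<eta>0 > 0" and b: "0 < b" "b < 1" and D: "D \<ge> 0" and s: "s \<ge> 0"
  shows "(real k powr b / \<eta>0 * D + s) / (2 * (real k * lo))
     \<le> 1 / real k powr (1 - b) * (D / (2 powr (1 - b) * lo * \<eta>0)) + 1 / real k * (s / (2 * lo))"
proof -
  have kp: "real k > 0" using k by simp
  have kk: "1 / real k powr (1 - b) = real k powr b / real k"
    using kp by (simp add: powr_diff)
  have t2: "2 powr (1 - b) \<le> 2" using powr_mono[of "1 - b" 1 2] b by simp
  have t2p: "0 < 2 powr (1 - b)" by simp
  have "D / (2 * lo * \<eta>0) \<le> D / (2 powr (1 - b) * lo * \<eta>0)"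
    using t2 t2p lo e D by (intro divide_left_mono mult_right_mono mult_pos_pos) auto
  then have "real k powr b / real k * (D / (2 * lo * \<eta>0)) \<le> real k powr b / real k * (D / (2 powr (1 - b) * lo * \<eta>0))"
    using kp by (intro mult_left_mono) auto
  moreover have "(real k powr b / \<eta>0 * D + s) / (2 * (real k * lo))
      = real k powr b / real k * (D / (2 * lo * \<eta>0)) + 1 / real k * (s / (2 * lo))"
    using kp lo e by (simp add: field_simps)
  ultimately show ?thesis unfolding kk by simp
qed

lemma finalB:
  fixes k :: nat and lo hi \<eta>0 b D s C :: real
  assumes k: "k \<ge> 1" and lo: "lo > 0" and b: "0 < b" "b < 1"
  shows "(D\<^sup>2 + s + 2 * hi * C * D * (\<eta>0 * (real k powr (1 - b) / (1 - b)))) / (2 * (real k * lo))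
     = (1 / real k) * (D\<^sup>2 / (2 * lo)) + (1 / real k) * (s / (2 * lo))
                      + (1 / real k powr b) * (\<eta>0 * hi * C * D / ((1 - b) * lo))"
proof -
  have kp: "real k > 0" using k by simp
  have kk: "real k powr (1 - b) = real k / real k powr b"
    using kp by (simp add: powr_diff)
  have "real k powr b > 0" using kp by simp
  then show ?thesis unfolding kk using kp lo b by (simp add: field_simps)
qed


theorem theorem3p8:
  fixes F H :: "'a::euclidean_space \<Rightarrow> 'a"
    and DF DH X \<Omega> :: "'a set"
    and LF LH \<eta>0 b lo hi :: real
    and \<alpha> lam \<eta> :: "nat \<Rightarrow> real"
    and x w w' y :: "nat \<Rightarrow> 'a"
  assumes monoF: "monotone_op DF F" and monoH: "monotone_op DH H"
    and LF_pos: "LF > 0" and LH_pos: "LH > 0"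
    and lipF: "LF-lipschitz_on DF F" and lipH: "LH-lipschitz_on DH H"
    and X: "compact X" "convex X" "X \<noteq> {}"
    and \<Omega>: "closed \<Omega>" "convex \<Omega>" "\<Omega> \<noteq> {}"
    and sub: "X \<subseteq> \<Omega>" "\<Omega> \<subseteq> DF \<inter> DH"
    and Qne: "VI_sol F X \<noteq> {}"
    and x0: "x 0 \<in> X"
    and w_def: "\<And>k. w k = x k + \<alpha> k *\<^sub>R (x k - (if k = 0 then x 0 else x (k - 1)))"
    and w'_def: "\<And>k. w' k = closest_point \<Omega> (w k)"
    and y_def: "\<And>k. y k = closest_point X (w k - lam k *\<^sub>R (F (w' k) + \<eta> k *\<^sub>R H (w' k)))"
    and x_def: "\<And>k. x (Suc k) = closest_point X (w k - lam k *\<^sub>R (F (y k) + \<eta> k *\<^sub>R H (y k)))"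
    and eta_def: "\<And>k. \<eta> k = \<eta>0 / (real k + 1) powr b"
    and eta0: "0 < \<eta>0" "\<eta>0 \<le> 1"
    and b: "0 < b" "b < 1"
    and alpha_nonneg: "\<And>k. \<alpha> k \<ge> 0"
    and alpha0: "\<alpha> 0 \<le> 1"
    and alpha_eta: "decseq (\<lambda>k. \<alpha> k / \<eta> k)"
    and lam: "\<And>k. lo \<le> lam k \<and> lam k \<le> hi"
    and lo: "0 < lo" "lo \<le> hi" and hi: "hi \<le> 1 / (LF + \<eta>0 * LH)"
    and summ: "summable (\<lambda>k. \<alpha> k * (1 + \<alpha> k) * (norm (x k - (if k = 0 then x 0 else x (k - 1))))\<^sup>2 / \<eta> k)"
  shows
    "let Q = VI_sol F X;
         DX = diameter X;
         CH = (SUP z\<in>X. norm (H z));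
         BH = (SUP z\<in>Q. norm (H z));
         s = (\<Sum>k. \<alpha> k * (1 + \<alpha> k) * (norm (x k - (if k = 0 then x 0 else x (k - 1))))\<^sup>2 / \<eta> k);
         Lam = (\<lambda>k. \<Sum>j<k. lam j);
         ybar = (\<lambda>k. (1 / Lam k) *\<^sub>R (\<Sum>j<k. lam j *\<^sub>R y j));
         R = (\<lambda>k::nat. (1 / real k) * (DX\<^sup>2 / (2 * lo)) + (1 / real k) * (s / (2 * lo))
                      + (1 / real k powr b) * (\<eta>0 * hi * CH * DX / ((1 - b) * lo)))
     in (\<forall>k\<ge>1.
           - BH * infdist (ybar k) Q \<le> Gap (ybar k) H Q \<and>
           Gap (ybar k) H Q \<le> (1 / real k powr (1 - b)) * (DX\<^sup>2 / (2 powr (1 - b) * lo * \<eta>0))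
                                + (1 / real k) * (s / (2 * lo))) \<and>
        (\<forall>k\<ge>1. 0 \<le> Gap (ybar k) F X \<and> Gap (ybar k) F X \<le> R k) \<and>
        (\<forall>\<sigma> M. \<sigma> > 0 \<longrightarrow> M \<ge> 1 \<longrightarrow> weakly_sharp F X Q \<sigma> M \<longrightarrow>
           (\<forall>k\<ge>1. Gap (ybar k) H Q \<ge> - (BH / \<sigma> powr (1 / M)) * (R k) powr (1 / M)))"
proof -
  define Q where "Q = VI_sol F X"
  define DX where "DX = diameter X"
  define CH where "CH = (SUP z\<in>X. norm (H z))"
  define BH where "BH = (SUP z\<in>Q. norm (H z))"
  define dl where "dl = (\<lambda>k. \<alpha> k * (1 + \<alpha> k) * (norm (x k - (if k = 0 then x 0 else x (k - 1))))\<^sup>2 / \<eta> k)"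
  define s where "s = (\<Sum>k. dl k)"
  define Lam where "Lam = (\<lambda>k. \<Sum>j<k. lam j)"
  define ybar where "ybar = (\<lambda>k. (1 / Lam k) *\<^sub>R (\<Sum>j<k. lam j *\<^sub>R y j))"
  define R where "R = (\<lambda>k::nat. (1 / real k) * (DX\<^sup>2 / (2 * lo)) + (1 / real k) * (s / (2 * lo))
                      + (1 / real k powr b) * (\<eta>0 * hi * CH * DX / ((1 - b) * lo)))"
  have clX: "closed X" using X compact_imp_closed by auto
  have bX: "bounded X" using X compact_imp_bounded by auto
  have XD: "X \<subseteq> DF" "X \<subseteq> DH" "\<Omega> \<subseteq> DF" "\<Omega> \<subseteq> DH" using sub by auto
  have Fc: "continuous_on X F"
    using lipschitz_on_continuous_on[OF lipF] XD continuous_on_subset by blast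
  have Hc: "continuous_on X H"
    using lipschitz_on_continuous_on[OF lipH] XD continuous_on_subset by blast
  have QX: "Q \<subseteq> X" unfolding Q_def VI_sol_def by auto
  have Qne': "Q \<noteq> {}" using Qne Q_def by simp
  have xX: "x k \<in> X" for k
    by (cases k) (use x0 x_def closest_point_in_set[OF clX X(3)] in auto)
  have yX: "y k \<in> X" for k
    using y_def closest_point_in_set[OF clX X(3)] by auto
  have DX0: "0 \<le> DX" unfolding DX_def using diameter_ge_0[OF bX] .
  have DXb: "norm (p - q) \<le> DX" if "p \<in> X" "q \<in> X" for p q
    using diameter_bounded_bound[OF bX that] unfolding DX_def by (simp add: dist_norm)
  have bddG: "bdd_above ((\<lambda>u. inner (G u) (z - u)) ` S)" if "continuous_on X G" "S \<subseteq> X" for G :: "'a \<Rightarrow> 'a" and z S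
  proof -
    have "compact ((\<lambda>u. inner (G u) (z - u)) ` X)"
      by (intro compact_continuous_image continuous_intros that X)
    then have "bdd_above ((\<lambda>u. inner (G u) (z - u)) ` X)"
      by (intro bounded_imp_bdd_above compact_imp_bounded)
    then show ?thesis using that(2) by (meson bdd_above_mono image_mono)
  qed
  have bddH: "bdd_above ((\<lambda>u. norm (H u)) ` S)" if "S \<subseteq> X" for S
  proof -
    have "compact ((\<lambda>u. norm (H u)) ` X)"
      by (intro compact_continuous_image continuous_intros Hc X)
    then have "bdd_above ((\<lambda>u. norm (H u)) ` X)"
      by (intro bounded_imp_bdd_above compact_imp_bounded)
    then show ?thesis using that by (meson bdd_above_mono image_mono)
  qed
  have CHb: "norm (H z) \<le> CH" if "z \<in> X" for z
    unfolding CH_def using bddH[of X] that by (intro cSUP_upper) auto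
  have CH0: "0 \<le> CH" using CHb[OF xX[of 0]] norm_ge_zero order_trans by blast
  have BHb: "norm (H z) \<le> BH" if "z \<in> Q" for z
    unfolding BH_def using bddH[OF QX] that by (intro cSUP_upper) auto
  have BH0: "0 \<le> BH" using Qne' BHb norm_ge_zero order_trans by blast
  have eta_pos: "\<eta> k > 0" for k using eta_def eta0 by simp
  have eta_inv: "1 / \<eta> k = (real k + 1) powr b / \<eta>0" for k using eta_def eta0 by simp
  have eta_dec: "\<eta> (Suc k) \<le> \<eta> k" for k
    unfolding eta_def using eta0 b by (intro divide_left_mono powr_mono2) auto
  have eta_le: "\<eta> k \<le> \<eta>0" for k
  proof -
    have "1 \<le> (real k + 1) powr b" by (rule ge_one_powr_ge_zero) (use b in auto)
    then have "\<eta>0 / (real k + 1) powr b \<le> \<eta>0 / 1" using eta0 by (intro divide_left_mono) auto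
    then show ?thesis unfolding eta_def by simp
  qed
  have eta_le1: "\<eta> k \<le> 1" for k using eta_le[of k] eta0 by linarith
  have e_dec: "\<alpha> (Suc k) / \<eta> (Suc k) \<le> \<alpha> k / \<eta> k" for k using decseq_SucD[OF alpha_eta] .
  have alpha_dec: "\<alpha> (Suc k) \<le> \<alpha> k" for k
  proof -
    have "\<alpha> (Suc k) = (\<alpha> (Suc k) / \<eta> (Suc k)) * \<eta> (Suc k)" using eta_pos[of "Suc k"] by simp
    also have "\<dots> \<le> (\<alpha> k / \<eta> k) * \<eta> k"
      using e_dec[of k] eta_dec[of k] eta_pos[of k] eta_pos[of "Suc k"] alpha_nonneg[of k]
      by (intro mult_mono) (auto intro: divide_nonneg_pos)
    also have "\<dots> = \<alpha> k" using eta_pos[of k] by simp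
    finally show ?thesis .
  qed
  have Glip: "norm ((F u + \<eta> k *\<^sub>R H u) - (F v + \<eta> k *\<^sub>R H v)) \<le> (LF + \<eta> k * LH) * norm (u - v)"
    if "u \<in> \<Omega>" "v \<in> \<Omega>" for u v k
  proof -
    have "norm ((F u + \<eta> k *\<^sub>R H u) - (F v + \<eta> k *\<^sub>R H v)) \<le> norm (F u - F v) + \<eta> k * norm (H u - H v)"
    proof -
      have e: "(F u + \<eta> k *\<^sub>R H u) - (F v + \<eta> k *\<^sub>R H v) = (F u - F v) + \<eta> k *\<^sub>R (H u - H v)"
        by (simp add: algebra_simps)
      show ?thesis unfolding e using eta_pos[of k] norm_triangle_ineq[of "F u - F v" "\<eta> k *\<^sub>R (H u - H v)"]
        by simp
    qed
    also have "\<dots> \<le> LF * norm (u - v) + \<eta> k * (LH * norm (u - v))"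
      using lipschitz_onD[OF lipF, of u v] lipschitz_onD[OF lipH, of u v] that XD eta_pos[of k]
      by (intro add_mono mult_left_mono) (auto simp: dist_norm)
    finally show ?thesis by (simp add: algebra_simps)
  qed
  have lamL: "lam k * (LF + \<eta> k * LH) \<le> 1" for k
  proof -
    have "lam k * (LF + \<eta> k * LH) \<le> hi * (LF + \<eta>0 * LH)"
    proof (rule mult_mono)
      show "lam k \<le> hi" using lam[of k] by simp
      show "LF + \<eta> k * LH \<le> LF + \<eta>0 * LH" using eta_le[of k] LH_pos by simp
      show "0 \<le> hi" using lo by simp
      show "0 \<le> LF + \<eta> k * LH" using LF_pos LH_pos eta_pos[of k] by simp
    qed
    also have "\<dots> \<le> 1"
    proof -
      have "0 < LF + \<eta>0 * LH" using LF_pos LH_pos eta0 by (simp add: add_pos_pos)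
      then show ?thesis using hi by (simp add: le_divide_eq)
    qed
    finally show ?thesis .
  qed
  define a where "a = (\<lambda>z j. (norm (x j - z))\<^sup>2)"
  define del where "del = (\<lambda>k. \<alpha> k * (1 + \<alpha> k) * (norm (x k - x (k - 1)))\<^sup>2)"
  have dl_eq: "dl k = del k / \<eta> k" for k unfolding dl_def del_def by (cases k) auto
  have del0: "0 \<le> del k" for k unfolding del_def using alpha_nonneg[of k] by simp
  have summ': "summable dl" using summ unfolding dl_def .
  have dl0: "0 \<le> dl k" for k using dl_eq del0 eta_pos[of k] by simp
  have dl_sum: "(\<Sum>j<k. dl j) \<le> s" for k
    unfolding s_def using summ' dl0 by (intro sum_le_suminf) auto
  have S: "2 * lam k * inner (F (y k) + \<eta> k *\<^sub>R H (y k)) (y k - z)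
      \<le> (1 + \<alpha> k) * a z k - \<alpha> k * a z (k - 1) + del k - a z (Suc k)" if z: "z \<in> X" for z k
  proof -
    have st: "(norm (x (Suc k) - z))\<^sup>2 \<le> (norm (w k - z))\<^sup>2 - 2 * lam k * inner (F (y k) + \<eta> k *\<^sub>R H (y k)) (y k - z)"
    proof -
      have l0: "0 \<le> lam k" using lam[of k] lo by (meson less_imp_le order_trans)
      have L0: "0 \<le> LF + \<eta> k * LH" using LF_pos LH_pos eta_pos[of k] by (simp add: add_nonneg_nonneg)
      show ?thesis
        by (rule eg_step[where G="\<lambda>u. F u + \<eta> k *\<^sub>R H u" and L="LF + \<eta> k * LH",
            OF clX X(2) X(3) \<Omega>(1) \<Omega>(2) sub(1) Glip l0 lamL L0 w'_def y_def x_def z])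
    qed
    have "w k - z = (1 + \<alpha> k) *\<^sub>R (x k - z) - \<alpha> k *\<^sub>R (x (k - 1) - z)"
      using w_def[of k] by (cases k) (auto simp: algebra_simps)
    then have "(norm (w k - z))\<^sup>2 = (1 + \<alpha> k) * a z k - \<alpha> k * a z (k - 1) + del k"
      unfolding a_def del_def using w_norm_identity[of "\<alpha> k" "x k - z" "x (k - 1) - z"] by simp
    then show ?thesis using st unfolding a_def by simp
  qed
  have a_bd: "0 \<le> a z j \<and> a z j \<le> DX\<^sup>2" if "z \<in> X" for z j
    unfolding a_def using DXb[OF xX that] by (simp add: power_mono)
  have Lam_lo: "real k * lo \<le> Lam k" for k
  proof -
    have "(\<Sum>j<k. lo) \<le> (\<Sum>j<k. lam j)" using lam by (intro sum_mono) auto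
    then show ?thesis unfolding Lam_def by simp
  qed
  have lamp: "lam k > 0" for k using lam[of k] lo by linarith
  have Lpos: "Lam k > 0" if "k \<ge> 1" for k
  proof -
    have "real k * lo > 0" using that lo by simp
    then show ?thesis using Lam_lo[of k] by linarith
  qed
  have ybar_inner: "inner v (ybar k - z) = (\<Sum>j<k. lam j * inner v (y j - z)) / Lam k"
    if "k \<ge> 1" for v z k
  proof -
    have Lp: "Lam k > 0" using Lpos that by blast
    have "(\<Sum>j<k. lam j * inner v (y j - z)) = inner v (\<Sum>j<k. lam j *\<^sub>R y j) - Lam k * inner v z"
      unfolding Lam_def by (simp add: inner_diff_right inner_sum_right sum_distrib_right sum_subtractf algebra_simps)
        (metis (no_types) mult.commute sum_distrib_right)
    then show ?thesis unfolding ybar_def using Lp by (simp add: inner_diff_right field_simps)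
  qed
  have ybarX: "ybar k \<in> X" if "k \<ge> 1" for k
  proof -
    have Lp: "Lam k > 0" using Lpos that by blast
    have "ybar k = (\<Sum>j<k. (lam j / Lam k) *\<^sub>R y j)"
      unfolding ybar_def by (simp add: scaleR_sum_right)
    also have "\<dots> \<in> X"
      apply (rule convex_sum[OF _ X(2)])
      using lamp lo Lp yX by (auto simp: Lam_def sum_divide_distrib[symmetric] intro!: divide_nonneg_pos less_imp_le)
    finally show ?thesis .
  qed
  have divbound: "S / Lam k \<le> N / (2 * (real k * lo))" if "2 * S \<le> N" "k \<ge> 1" "0 \<le> N" for S N k
  proof -
    have Lp: "Lam k > 0" using Lpos that by blast
    have kl: "real k * lo > 0" using that lo by simp
    show ?thesis
    proof (cases "S \<le> 0")
      case True
      then have "S / Lam k \<le> 0" using Lp by (simp add: divide_nonpos_pos)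
      also have "0 \<le> N / (2 * (real k * lo))" using True that kl by simp
      finally show ?thesis .
    next
      case False
      then have "S / Lam k \<le> S / (real k * lo)" using Lp Lam_lo[of k] kl by (intro divide_left_mono) auto
      also have "\<dots> \<le> N / (2 * (real k * lo))" using that kl by (simp add: field_simps)
      finally show ?thesis .
    qed
  qed
  have s0: "0 \<le> s" unfolding s_def using summ' dl0 by (intro suminf_nonneg) auto
  have Fmono: "inner (F z) (v - z) \<le> inner (F v) (v - z)" if "z \<in> X" "v \<in> X" for z v
    using monoF that XD unfolding monotone_op_def by (auto simp: inner_diff_left)
  have Hmono: "inner (H z) (v - z) \<le> inner (H v) (v - z)" if "z \<in> X" "v \<in> X" for z v
    using monoH that XD unfolding monotone_op_def by (auto simp: inner_diff_left)
  have Sexp: "2 * lam j * inner (F (y j)) (y j - z) + 2 * lam j * \<eta> j * inner (H (y j)) (y j - z)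
      \<le> (1 + \<alpha> j) * a z j - \<alpha> j * a z (j - 1) + del j - a z (Suc j)" if "z \<in> X" for z j
    using S[OF that, of j] by (simp add: inner_add_left algebra_simps)
  have c_inc: "1 / \<eta> j \<le> 1 / \<eta> (Suc j)" for j
    using eta_dec[of j] eta_pos[of j] eta_pos[of "Suc j"] by (intro divide_left_mono) auto
  have e0: "0 \<le> \<alpha> j / \<eta> j" for j using alpha_nonneg[of j] eta_pos[of j] by simp
  have ce0: "\<alpha> 0 / \<eta> 0 \<le> 1 / \<eta> 0" using alpha0 eta_pos[of 0] by (intro divide_right_mono) auto
  have upA: "inner (H z) (ybar k - z) \<le> 1 / real k powr (1 - b) * (DX\<^sup>2 / (2 powr (1 - b) * lo * \<eta>0)) + 1 / real k * (s / (2 * lo))"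
    if k: "k \<ge> 1" and z: "z \<in> Q" for k z
  proof -
    have zX: "z \<in> X" using z QX by auto
    obtain n where n: "k = Suc n" using k by (cases k) auto
    have perj: "2 * (lam j * inner (H z) (y j - z)) \<le> (1 / \<eta> j) * (a z j - a z (Suc j)) + (\<alpha> j / \<eta> j) * (a z j - a z (j - 1)) + dl j" for j
    proof -
      have f0: "0 \<le> inner (F (y j)) (y j - z)"
        using Fmono[OF zX yX[of j]] z yX[of j] unfolding Q_def VI_sol_def by force
      have "2 * lam j * \<eta> j * inner (H z) (y j - z) \<le> 2 * lam j * \<eta> j * inner (H (y j)) (y j - z)"
        using Hmono[OF zX yX[of j]] lamp[of j] eta_pos[of j] by (intro mult_left_mono) auto
      also have "\<dots> \<le> (1 + \<alpha> j) * a z j - \<alpha> j * a z (j - 1) + del j - a z (Suc j)"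
        using Sexp[OF zX, of j] f0 lamp[of j] by (smt (verit) mult_nonneg_nonneg)
      finally have h: "2 * lam j * \<eta> j * inner (H z) (y j - z) \<le> (1 + \<alpha> j) * a z j - \<alpha> j * a z (j - 1) + del j - a z (Suc j)" .
      have "2 * (lam j * inner (H z) (y j - z)) = (2 * lam j * \<eta> j * inner (H z) (y j - z)) / \<eta> j"
        using eta_pos[of j] by simp
      also have "\<dots> \<le> ((1 + \<alpha> j) * a z j - \<alpha> j * a z (j - 1) + del j - a z (Suc j)) / \<eta> j"
        using h eta_pos[of j] by (intro divide_right_mono) auto
      also have "\<dots> = (1 / \<eta> j) * (a z j - a z (Suc j)) + (\<alpha> j / \<eta> j) * (a z j - a z (j - 1)) + dl j"
        unfolding dl_eq using eta_pos[of j] by (simp add: field_simps)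
      finally show ?thesis .
    qed
    have T: "(\<Sum>j<Suc n. (1 / \<eta> j) * (a z j - a z (Suc j)) + (\<alpha> j / \<eta> j) * (a z j - a z (j - 1))) \<le> (1 / \<eta> n) * DX\<^sup>2"
      by (rule tele) (use a_bd[OF zX] c_inc e_dec e0 ce0 in auto)
    have "2 * (\<Sum>j<k. lam j * inner (H z) (y j - z)) = (\<Sum>j<k. 2 * (lam j * inner (H z) (y j - z)))"
      by (simp add: sum_distrib_left)
    also have "\<dots> \<le> (\<Sum>j<k. ((1 / \<eta> j) * (a z j - a z (Suc j)) + (\<alpha> j / \<eta> j) * (a z j - a z (j - 1))) + dl j)"
      by (intro sum_mono perj)
    also have "\<dots> = (\<Sum>j<k. (1 / \<eta> j) * (a z j - a z (Suc j)) + (\<alpha> j / \<eta> j) * (a z j - a z (j - 1))) + (\<Sum>j<k. dl j)"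
      by (simp add: sum.distrib)
    also have "\<dots> \<le> (1 / \<eta> n) * DX\<^sup>2 + s" using T dl_sum[of k] n by simp
    also have "\<dots> = real k powr b / \<eta>0 * DX\<^sup>2 + s" using eta_inv[of n] n by (simp add: add.commute)
    finally have "2 * (\<Sum>j<k. lam j * inner (H z) (y j - z)) \<le> real k powr b / \<eta>0 * DX\<^sup>2 + s" .
    then have "(\<Sum>j<k. lam j * inner (H z) (y j - z)) / Lam k \<le> (real k powr b / \<eta>0 * DX\<^sup>2 + s) / (2 * (real k * lo))"
      using k s0 eta0 by (intro divbound) auto
    also have "\<dots> \<le> 1 / real k powr (1 - b) * (DX\<^sup>2 / (2 powr (1 - b) * lo * \<eta>0)) + 1 / real k * (s / (2 * lo))"
      by (rule finalA) (use k lo eta0 b s0 in auto)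
    finally show ?thesis unfolding ybar_inner[OF k] .
  qed
  have eta_sum: "(\<Sum>j<k. \<eta> j) \<le> \<eta>0 * (real k powr (1 - b) / (1 - b))" for k
  proof -
    have "(\<Sum>j<k. \<eta> j) = \<eta>0 * (\<Sum>j<k. 1 / (real j + 1) powr b)"
      unfolding eta_def by (simp add: sum_distrib_left)
    also have "\<dots> \<le> \<eta>0 * (real k powr (1 - b) / (1 - b))"
      using eta_sum_bound[OF b] eta0 by (intro mult_left_mono) auto
    finally show ?thesis .
  qed
  have upB: "inner (F z) (ybar k - z) \<le> R k" if k: "k \<ge> 1" and zX: "z \<in> X" for k z
  proof -
    obtain n where n: "k = Suc n" using k by (cases k) auto
    have perj: "2 * (lam j * inner (F z) (y j - z)) \<le> ((a z j - a z (Suc j)) + \<alpha> j * (a z j - a z (j - 1))) + dl j + 2 * hi * CH * DX * \<eta> j" for j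
    proof -
      have "- inner (H (y j)) (y j - z) \<le> norm (H (y j)) * norm (y j - z)"
        using Cauchy_Schwarz_ineq2[of "H (y j)" "y j - z"] by linarith
      also have "\<dots> \<le> CH * DX" using CHb[OF yX[of j]] DXb[OF yX[of j] zX] CH0 by (intro mult_mono) auto
      finally have hb: "- inner (H (y j)) (y j - z) \<le> CH * DX" .
      have "2 * lam j * \<eta> j * (- inner (H (y j)) (y j - z)) \<le> 2 * lam j * \<eta> j * (CH * DX)"
        using hb lamp[of j] eta_pos[of j] by (intro mult_left_mono) auto
      also have "\<dots> \<le> 2 * hi * \<eta> j * (CH * DX)"
        using lam[of j] eta_pos[of j] CH0 DX0 by (intro mult_right_mono) auto
      finally have h1: "- (2 * lam j * \<eta> j * inner (H (y j)) (y j - z)) \<le> 2 * hi * CH * DX * \<eta> j" by (simp add: algebra_simps)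
      have h2: "2 * lam j * inner (F z) (y j - z) \<le> 2 * lam j * inner (F (y j)) (y j - z)"
        using Fmono[OF zX yX[of j]] lamp[of j] by simp
      have h3: "del j \<le> dl j"
      proof -
        have "del j = dl j * \<eta> j" using dl_eq[of j] eta_pos[of j] by simp
        also have "\<dots> \<le> dl j * 1" using dl0[of j] eta_le1[of j] by (intro mult_left_mono) auto
        finally show ?thesis by simp
      qed
      show ?thesis using Sexp[OF zX, of j] h1 h2 h3 by (simp add: algebra_simps)
    qed
    have T: "(\<Sum>j<Suc n. 1 * (a z j - a z (Suc j)) + \<alpha> j * (a z j - a z (j - 1))) \<le> 1 * DX\<^sup>2"
      by (rule tele) (use a_bd[OF zX] alpha_dec alpha_nonneg alpha0 in auto)
    have "2 * (\<Sum>j<k. lam j * inner (F z) (y j - z)) = (\<Sum>j<k. 2 * (lam j * inner (F z) (y j - z)))"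
      by (simp add: sum_distrib_left)
    also have "\<dots> \<le> (\<Sum>j<k. ((a z j - a z (Suc j)) + \<alpha> j * (a z j - a z (j - 1))) + dl j + 2 * hi * CH * DX * \<eta> j)"
      by (intro sum_mono perj)
    also have "\<dots> = (\<Sum>j<k. (a z j - a z (Suc j)) + \<alpha> j * (a z j - a z (j - 1))) + (\<Sum>j<k. dl j) + 2 * hi * CH * DX * (\<Sum>j<k. \<eta> j)"
      by (simp add: sum.distrib sum_distrib_left)
    also have "\<dots> \<le> DX\<^sup>2 + s + 2 * hi * CH * DX * (\<eta>0 * (real k powr (1 - b) / (1 - b)))"
    proof -
      have "0 \<le> 2 * hi * CH * DX" using lo CH0 DX0 by simp
      then have "2 * hi * CH * DX * (\<Sum>j<k. \<eta> j) \<le> 2 * hi * CH * DX * (\<eta>0 * (real k powr (1 - b) / (1 - b)))"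
        using eta_sum[of k] by (intro mult_left_mono) auto
      then show ?thesis using T dl_sum[of k] n by simp
    qed
    finally have "2 * (\<Sum>j<k. lam j * inner (F z) (y j - z)) \<le> DX\<^sup>2 + s + 2 * hi * CH * DX * (\<eta>0 * (real k powr (1 - b) / (1 - b)))" .
    then have "(\<Sum>j<k. lam j * inner (F z) (y j - z)) / Lam k \<le> (DX\<^sup>2 + s + 2 * hi * CH * DX * (\<eta>0 * (real k powr (1 - b) / (1 - b)))) / (2 * (real k * lo))"
      using k s0 eta0 lo CH0 DX0 b by (intro divbound) auto
    also have "\<dots> = R k" unfolding R_def by (rule finalB) (use k lo b in auto)
    finally show ?thesis unfolding ybar_inner[OF k] .
  qed
  have lowA: "- BH * infdist (ybar k) Q \<le> Gap (ybar k) H Q" if k: "k \<ge> 1" for k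
  proof -
    have gz: "- Gap (ybar k) H Q \<le> BH * dist (ybar k) z" if z: "z \<in> Q" for z
    proof -
      have "inner (H z) (ybar k - z) \<le> Gap (ybar k) H Q"
        unfolding Gap_def using z bddG[OF Hc QX] by (intro cSUP_upper) auto
      moreover have "- inner (H z) (ybar k - z) \<le> norm (H z) * norm (ybar k - z)"
        using Cauchy_Schwarz_ineq2[of "H z" "ybar k - z"] by linarith
      moreover have "norm (H z) * norm (ybar k - z) \<le> BH * dist (ybar k) z"
        using BHb[OF z] by (simp add: dist_norm mult_right_mono)
      ultimately show ?thesis by linarith
    qed
    show ?thesis
    proof (cases "BH = 0")
      case True
      then show ?thesis using gz Qne' by fastforce
    next
      case False
      then have BHp: "BH > 0" using BH0 by simp
      have "- Gap (ybar k) H Q / BH \<le> infdist (ybar k) Q"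
        unfolding infdist_notempty[OF Qne']
      proof (rule cINF_greatest[OF Qne'])
        fix z assume z: "z \<in> Q"
        have "- Gap (ybar k) H Q \<le> dist (ybar k) z * BH" using gz[OF z] by (simp add: mult.commute)
        then show "- Gap (ybar k) H Q / BH \<le> dist (ybar k) z"
          using pos_divide_le_eq[OF BHp, of "- Gap (ybar k) H Q" "dist (ybar k) z"] by blast
      qed
      then have "- Gap (ybar k) H Q \<le> infdist (ybar k) Q * BH"
        using pos_divide_le_eq[OF BHp, of "- Gap (ybar k) H Q" "infdist (ybar k) Q"] by blast
      then show ?thesis by (simp add: mult.commute)
    qed
  qed
  have GapF0: "0 \<le> Gap (ybar k) F X" if k: "k \<ge> 1" for k
  proof -
    have "inner (F (ybar k)) (ybar k - ybar k) \<le> Gap (ybar k) F X"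
      unfolding Gap_def using ybarX[OF k] bddG[OF Fc subset_refl] by (intro cSUP_upper) auto
    then show ?thesis by simp
  qed
  have GapFup: "Gap (ybar k) F X \<le> R k" if k: "k \<ge> 1" for k
    unfolding Gap_def using upB[OF k] X(3) by (intro cSUP_least) auto
  have GapHup: "Gap (ybar k) H Q \<le> 1 / real k powr (1 - b) * (DX\<^sup>2 / (2 powr (1 - b) * lo * \<eta>0)) + 1 / real k * (s / (2 * lo))"
    if k: "k \<ge> 1" for k
    unfolding Gap_def using upA[OF k] Qne' by (intro cSUP_least) auto
  have partC: "Gap (ybar k) H Q \<ge> - (BH / \<sigma> powr (1 / M)) * (R k) powr (1 / M)"
    if sg: "\<sigma> > 0" and M: "M \<ge> 1" and ws: "weakly_sharp F X Q \<sigma> M" and k: "k \<ge> 1" for \<sigma> M k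
  proof -
    obtain z0 where z0: "z0 \<in> Q" using Qne' by auto
    define d where "d = infdist (ybar k) Q"
    have d0: "0 \<le> d" unfolding d_def by (rule infdist_nonneg)
    have "\<sigma> * d powr M \<le> inner (F z0) (ybar k - z0)"
      using ws z0 ybarX[OF k] unfolding weakly_sharp_def d_def by auto
    also have "\<dots> \<le> Gap (ybar k) F X"
      unfolding Gap_def using z0 QX bddG[OF Fc subset_refl] by (intro cSUP_upper) auto
    also have "\<dots> \<le> R k" by (rule GapFup[OF k])
    finally have sR: "\<sigma> * d powr M \<le> R k" .
    have dM: "d powr M \<le> R k / \<sigma>" using sR sg by (simp add: le_divide_eq mult.commute)
    have "(d powr M) powr (1 / M) \<le> (R k / \<sigma>) powr (1 / M)"
      using dM M by (intro powr_mono2) auto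
    moreover have "(d powr M) powr (1 / M) = d"
      using d0 M by (simp add: powr_powr powr_one)
    ultimately have "d \<le> (R k) powr (1 / M) / \<sigma> powr (1 / M)" by (simp add: powr_divide)
    then have "BH * d \<le> BH * ((R k) powr (1 / M) / \<sigma> powr (1 / M))" using BH0 by (intro mult_left_mono) auto
    then have "- (BH / \<sigma> powr (1 / M)) * (R k) powr (1 / M) \<le> - BH * d" by simp
    also have "\<dots> \<le> Gap (ybar k) H Q" using lowA[OF k] unfolding d_def .
    finally show ?thesis .
  qed
  have main: "(\<forall>k\<ge>1.
           - BH * infdist (ybar k) Q \<le> Gap (ybar k) H Q \<and>
           Gap (ybar k) H Q \<le> (1 / real k powr (1 - b)) * (DX\<^sup>2 / (2 powr (1 - b) * lo * \<eta>0))
                                + (1 / real k) * (s / (2 * lo))) \<and>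
        (\<forall>k\<ge>1. 0 \<le> Gap (ybar k) F X \<and> Gap (ybar k) F X \<le> R k) \<and>
        (\<forall>\<sigma> M. \<sigma> > 0 \<longrightarrow> M \<ge> 1 \<longrightarrow> weakly_sharp F X Q \<sigma> M \<longrightarrow>
           (\<forall>k\<ge>1. Gap (ybar k) H Q \<ge> - (BH / \<sigma> powr (1 / M)) * (R k) powr (1 / M)))"
    using lowA GapHup GapF0 GapFup partC by blast
  show ?thesis unfolding Let_def
    using main unfolding Q_def DX_def CH_def BH_def s_def dl_def Lam_def ybar_def R_def .
qed

end
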